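(* Let $m,a,b,n$ be positive integers with $n\ge 3$ and $(3m+1)/2\le a<b\le (5m-1)/3$. Let $A\subset\mathbb N_+$ with $|A|=n-1$, $\min A=a$, $\max A=b$, and suppose that $A$ induces a $B_3$ set in $\mathbb Z/m\mathbb Z$ in the following sense: the sums $x_1+\dots+x_h$, taken over all $h\in\{1,2,3\}$ and all multisets $\{x_1,\dots,x_h\}$ of elements of $A$, are pairwise distinct modulo $m$ (distinct multisets, including those of different sizes, give distinct residues). Let $S=\langle \{m\}\cup A\rangle_{4m}$. Then $S$ has conductor $4m$, $|P\cap L|=n$, and $$W_0(S)=-\binom{n}{3}.$$
   Context: $\mathbb N=\{0,1,2,\dots\}$, $\mathbb N_+=\mathbb N\setminus\{0\}$; $[x,y]=\{z\in\mathbb Z: x\le z\le y\}$. For a finite set $B$ of positive integers and a positive integer $t$, $\langle B\rangle_t=\big(\sum_{x\in B}\mathbb N x\big)\cup\{z\in\mathbb Z: z\ge t\}$; this is a numerical semigroup. A numerical semigroup is a submonoid $S\subseteq\mathbb N$ with $\mathbb N\setminus S$ finite; multiplicity $m=\min(S\setminus\{0\})$; conductor $c=1+\max(\mathbb Z\setminus S)$; $q=\lceil c/m\rceil$, $\rho=qm-c$. Let $S^*=S\setminus\{0\}$, $D=S^*+S^*$, $P=S^*\setminus D$ (primitive elements), $L=S\cap[0,c-1]$, $D_q=D\cap[c,c+m-1]$, and $W_0(S)=|P\cap L|\,|L|-q|D_q|+\rho$. *)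

theory Defs
  imports Complex_Main "HOL-Library.Multiset"
begin

definition gen_sg :: "nat set \<Rightarrow> nat \<Rightarrow> nat set" where
  "gen_sg B t = {\<Sum>x\<in>B. f x * x | f. True} \<union> {t..}"

definition multiplicity_ns :: "nat set \<Rightarrow> nat" where
  "multiplicity_ns S = (LEAST x. x \<in> S \<and> x \<noteq> 0)"

text \<open>conductor c = 1 + max (Z \ S); for S \<subseteq> N this is the least c with [c,\<infinity>) \<subseteq> S.\<close>
definition conductor_ns :: "nat set \<Rightarrow> nat" where
  "conductor_ns S = (LEAST c. \<forall>z\<ge>c. z \<in> S)"

definition q_ns :: "nat set \<Rightarrow> nat" where
  "q_ns S = nat \<lceil>real (conductor_ns S) / real (multiplicity_ns S)\<rceil>"

definition rho_ns :: "nat set \<Rightarrow> int" where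
  "rho_ns S = int (q_ns S * multiplicity_ns S) - int (conductor_ns S)"

definition Sstar :: "nat set \<Rightarrow> nat set" where
  "Sstar S = S - {0}"

definition D_ns :: "nat set \<Rightarrow> nat set" where
  "D_ns S = {x + y | x y. x \<in> Sstar S \<and> y \<in> Sstar S}"

definition P_ns :: "nat set \<Rightarrow> nat set" where
  "P_ns S = Sstar S - D_ns S"

definition L_ns :: "nat set \<Rightarrow> nat set" where
  "L_ns S = S \<inter> {0..<conductor_ns S}"

definition Dq_ns :: "nat set \<Rightarrow> nat set" where
  "Dq_ns S = D_ns S \<inter> {conductor_ns S .. conductor_ns S + multiplicity_ns S - 1}"

definition W0 :: "nat set \<Rightarrow> int" where
  "W0 S = int (card (P_ns S \<inter> L_ns S)) * int (card (L_ns S))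
          - int (q_ns S) * int (card (Dq_ns S)) + rho_ns S"

end

theory Submission
  imports Defs
begin


lemma mset_size2: "size X = 2 \<Longrightarrow> \<exists>x y. X = {#x,y#}"
proof -
  assume h: "size X = 2"
  then obtain a N where X: "X = add_mset a N" using size_eq_Suc_imp_eq_union[of X 1] by auto
  then have "size N = 1" using h by simp
  then obtain b where "N = {#b#}" using size_1_singleton_mset by blast
  then show ?thesis using X by auto
qed

lemma mset_size3: "size X = 3 \<Longrightarrow> \<exists>x y z. X = {#x,y,z#}"
proof -
  assume h: "size X = 3"
  then obtain a N where X: "X = add_mset a N" using size_eq_Suc_imp_eq_union[of X 2] by auto
  then have "size N = 2" using h by simp
  then obtain b c where "N = {#b,c#}" using mset_size2 by blast
  then show ?thesis using X by auto
qed

lemma sum_to_mset: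
  fixes B :: "nat set" and f :: "nat \<Rightarrow> nat"
  assumes "finite B" shows "\<exists>M. set_mset M \<subseteq> B \<and> sum_mset M = (\<Sum>x\<in>B. f x * x)"
  using assms
proof (induction B rule: finite_induct)
  case empty then show ?case by (intro exI[of _ "{#}"]) auto
next
  case (insert b B)
  then obtain M where M: "set_mset M \<subseteq> B" "sum_mset M = (\<Sum>x\<in>B. f x * x)" by blast
  show ?case
    by (rule exI[of _ "replicate_mset (f b) b + M"]) (use insert M in auto)
qed

lemma mset_to_sum:
  fixes B :: "nat set"
  assumes "finite B" "set_mset M \<subseteq> B" shows "\<exists>f. sum_mset M = (\<Sum>x\<in>B. f x * x)"
  using assms(2)
proof (induction M)
  case empty then show ?case by (intro exI[of _ "\<lambda>_. 0"]) auto
next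
  case (add y M)
  then have yB: "y \<in> B" and MB: "set_mset M \<subseteq> B" by auto
  then obtain f where f: "sum_mset M = (\<Sum>x\<in>B. f x * x)" using add by blast
  define g where "g = f(y := Suc (f y))"
  have "(\<Sum>x\<in>B. g x * x) = g y * y + (\<Sum>x\<in>B-{y}. g x * x)"
    using sum.remove[OF assms(1) yB] by blast
  also have "(\<Sum>x\<in>B-{y}. g x * x) = (\<Sum>x\<in>B-{y}. f x * x)"
    by (rule sum.cong) (auto simp: g_def)
  also have "g y * y + (\<Sum>x\<in>B-{y}. f x * x) = y + (f y * y + (\<Sum>x\<in>B-{y}. f x * x))"
    by (simp add: g_def)
  also have "f y * y + (\<Sum>x\<in>B-{y}. f x * x) = (\<Sum>x\<in>B. f x * x)"
    using sum.remove[OF assms(1) yB, of "\<lambda>x. f x * x"] by simp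
  finally show ?case using f by (intro exI[of _ g]) simp
qed

lemma gen_sg_mem:
  assumes "finite B"
  shows "z \<in> gen_sg B t \<longleftrightarrow> (\<exists>M. set_mset M \<subseteq> B \<and> sum_mset M = z) \<or> t \<le> z"
  unfolding gen_sg_def using sum_to_mset[OF assms] mset_to_sum[OF assms] by fastforce

lemma sum_mset_ge: "(\<forall>x\<in>#M. a \<le> (x::nat)) \<Longrightarrow> size M * a \<le> sum_mset M"
  by (induction M) auto


lemma ch2: "2 * ((k+1) choose 2) = (k+1)*k"
  by (induction k) (auto simp: numeral_2_eq_2 algebra_simps)
lemma ch3: "6 * ((k+2) choose 3) = (k+2)*(k+1)*k"
proof (induction k)
  case 0 then show ?case by simp
next
  case (Suc k)
  have "(Suc k + 2) choose 3 = ((k+2) choose 2) + ((k+2) choose 3)" by (simp add: numeral_3_eq_3 numeral_2_eq_2)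
  moreover have "2 * ((k+2) choose 2) = (k+2)*(k+1)" using ch2[of "k+1"] by (simp add: algebra_simps)
  ultimately show ?case using Suc by (simp add: algebra_simps)
qed
lemma ch_pas: "(k+2) choose 3 = ((k+1) choose 2) + ((k+1) choose 3)"
  by (simp add: numeral_3_eq_3 numeral_2_eq_2)
lemma w0_arith: "int (k+1) * int (4 + 3*k + ((k+1) choose 2)) - 4 * int (1 + k + ((k+1) choose 2) + ((k+2) choose 3)) + 0
   = - int ((k+1) choose 3)"
proof -
  define c2 where "c2 = (k+1) choose 2"
  define c3 where "c3 = (k+2) choose 3"
  define d3 where "d3 = (k+1) choose 3"
  have h1: "2*int c2 = (int k+1)*int k" using arg_cong[OF ch2[of k], of int] unfolding c2_def by (simp add: algebra_simps)
  have h2: "6*int c3 = (int k+2)*(int k+1)*int k" using arg_cong[OF ch3[of k], of int] unfolding c3_def by (simp add: algebra_simps)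
  have h3: "int c3 = int c2 + int d3" using ch_pas[of k] unfolding c2_def c3_def d3_def by simp
  have "2 * (int (k+1) * int (4 + 3*k + c2) - 4 * int (1 + k + c2 + c3) + int d3) = 0"
  proof -
    have h1': "2*int k*int c2 = (int k+1)*int k*int k" using h1 by (metis mult.assoc mult.commute mult.left_commute)
    show ?thesis using h1 h1' h2 h3 by (simp add: algebra_simps)
  qed
  thus ?thesis unfolding c2_def c3_def d3_def by simp
qed


locale ctx =
  fixes m a b :: nat and A :: "nat set"
  assumes fin: "finite A" and bnd: "\<And>x. x\<in>A \<Longrightarrow> a \<le> x \<and> x \<le> b"
   and ha: "3*m+1 \<le> 2*a" and hb: "3*b+1 \<le> 5*m" and ab: "a \<le> b"
   and B3: "\<And>X Y. set_mset X \<subseteq> A \<Longrightarrow> set_mset Y \<subseteq> A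
              \<Longrightarrow> size X \<in> {1,2,3} \<Longrightarrow> size Y \<in> {1,2,3} \<Longrightarrow> X \<noteq> Y
              \<Longrightarrow> sum_mset X mod m \<noteq> sum_mset Y mod m"
begin

definition "S = gen_sg (insert m A) (4*m)"
definition "P2 = {x+y | x y. x\<in>A \<and> y\<in>A}"
definition "P3 = {x+y+z | x y z. x\<in>A \<and> y\<in>A \<and> z\<in>A}"
definition "L0 = {0,m,2*m,3*m} \<union> A \<union> (\<lambda>x. x+m) ` A \<union> (\<lambda>x. x+2*m) ` A \<union> P2"

lemma m5: "5 \<le> m" using ha hb ab by linarith

lemma memS: "z \<in> S \<longleftrightarrow> (\<exists>M. set_mset M \<subseteq> insert m A \<and> sum_mset M = z) \<or> 4*m \<le> z"
  unfolding S_def using gen_sg_mem[of "insert m A"] fin by simp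

lemma mS: "sum_mset M \<in> S" if "set_mset M \<subseteq> insert m A"
  using that memS by blast

lemma charL1:
  assumes "z < 4*m" "z \<in> S" shows "z \<in> L0"
proof -
  obtain M where M: "set_mset M \<subseteq> insert m A" "sum_mset M = z" using assms memS by auto
  define M' where "M' = filter_mset (\<lambda>x. x \<noteq> m) M"
  define c where "c = count M m"
  have "M = filter_mset (\<lambda>x. x = m) M + M'" unfolding M'_def by (rule multiset_partition)
  also have "filter_mset (\<lambda>x. x = m) M = replicate_mset c m"
    unfolding c_def by (rule filter_eq_replicate_mset)
  finally have "sum_mset M = sum_mset (replicate_mset c m + M')" by simp
  hence "sum_mset M = c*m + sum_mset M'" by simp
  hence z: "z = c*m + sum_mset M'" using M by simp
  have M'A: "set_mset M' \<subseteq> A" using M unfolding M'_def by auto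
  have ge: "size M' * a \<le> sum_mset M'" using M'A bnd by (intro sum_mset_ge) auto
  have "size M' \<le> 2"
  proof (rule ccontr)
    assume "\<not> size M' \<le> 2"
    hence "3 * a \<le> size M' * a" by (intro mult_right_mono) auto
    thus False using ge z assms(1) ha by linarith
  qed
  hence "size M' = 0 \<or> size M' = 1 \<or> size M' = 2" by linarith
  moreover {
    assume "size M' = 0"
    hence z2: "z = c*m" using z by simp
    have "c \<le> 3"
    proof (rule ccontr)
      assume "\<not> c \<le> 3" hence "4*m \<le> c*m" by (intro mult_right_mono) auto
      thus False using z2 assms(1) by linarith
    qed
    hence "c = 0 \<or> c = 1 \<or> c = 2 \<or> c = 3" by linarith
    hence "z \<in> L0" using z2 unfolding L0_def by auto
  }
  moreover {
    assume "size M' = 1"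
    then obtain x where x: "M' = {#x#}" using size_1_singleton_mset by blast
    hence xA: "x \<in> A" using M'A by auto
    have z2: "z = c*m + x" using z x by simp
    have "c \<le> 2"
    proof (rule ccontr)
      assume "\<not> c \<le> 2" hence "3*m \<le> c*m" by (intro mult_right_mono) auto
      thus False using z2 assms(1) bnd[OF xA] ha by linarith
    qed
    hence "c = 0 \<or> c = 1 \<or> c = 2" by linarith
    hence "z \<in> L0" using z2 xA unfolding L0_def by (auto simp: add.commute)
  }
  moreover {
    assume "size M' = 2"
    then obtain x y where x: "M' = {#x,y#}" using mset_size2 by blast
    hence xA: "x \<in> A" "y \<in> A" using M'A by auto
    have z2: "z = c*m + (x+y)" using z x by simp
    have "c = 0"
    proof (rule ccontr)
      assume "\<not> c = 0" hence "1*m \<le> c*m" by (intro mult_right_mono) auto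
      thus False using z2 assms(1) bnd[OF xA(1)] bnd[OF xA(2)] ha by linarith
    qed
    hence "z \<in> L0" using z2 xA unfolding L0_def P2_def by auto
  }
  ultimately show ?thesis by blast
qed

lemma charL2:
  assumes "z \<in> L0" shows "z \<in> S"
proof -
  have "z \<in> {0,m,2*m,3*m} \<or> z \<in> A \<or> z \<in> (\<lambda>x. x+m) ` A \<or> z \<in> (\<lambda>x. x+2*m) ` A \<or> z \<in> P2"
    using assms unfolding L0_def by blast
  moreover have "0 \<in> S" using mS[of "{#}"] by simp
  moreover have "m \<in> S" using mS[of "{#m#}"] by simp
  moreover have "2*m \<in> S" using mS[of "{#m,m#}"] by (simp add: mult_2)
  moreover have "3*m \<in> S" using mS[of "{#m,m,m#}"] by (simp add: numeral_3_eq_3)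
  moreover have "x \<in> A \<Longrightarrow> x \<in> S" for x using mS[of "{#x#}"] by simp
  moreover have "x \<in> A \<Longrightarrow> x+m \<in> S" for x using mS[of "{#x,m#}"] by (simp add: add.commute)
  moreover have "x \<in> A \<Longrightarrow> x+2*m \<in> S" for x using mS[of "{#x,m,m#}"] by (simp add: mult_2 add.commute add.left_commute)
  moreover have "x \<in> A \<Longrightarrow> y \<in> A \<Longrightarrow> x+y \<in> S" for x y using mS[of "{#x,y#}"] by (simp add: add.commute)
  ultimately show ?thesis unfolding P2_def by blast
qed

lemma charL: "z < 4*m \<Longrightarrow> z \<in> S \<longleftrightarrow> z \<in> L0"
  using charL1 charL2 by blast

lemma ge4: "4*m \<le> z \<Longrightarrow> z \<in> S" using memS by blast

lemma L0_bounds: "z \<in> L0 \<Longrightarrow> z < 4*m \<and> (z = 0 \<or> m \<le> z)"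
proof -
  assume "z \<in> L0"
  hence "z \<in> {0,m,2*m,3*m} \<or> (\<exists>x\<in>A. z = x \<or> z = x+m \<or> z = x+2*m) \<or> (\<exists>x\<in>A. \<exists>y\<in>A. z=x+y)"
    unfolding L0_def P2_def by blast
  thus ?thesis using ha hb m5 by (elim disjE bexE) (auto dest!: bnd)
qed

lemma S_pos: "z \<in> S \<Longrightarrow> z \<noteq> 0 \<Longrightarrow> m \<le> z"
  using charL L0_bounds by (cases "z < 4*m") auto


end

context ctx begin


lemma L0_cases: "s \<in> L0 \<Longrightarrow> s \<noteq> 0 \<Longrightarrow> s = m \<or> s = 2*m \<or> s = 3*m \<or> (\<exists>x\<in>A. s = x \<or> s = x+m \<or> s = x+2*m) \<or> (\<exists>x\<in>A. \<exists>y\<in>A. s=x+y)"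
  unfolding L0_def P2_def by blast

lemma notin: "4*m - 1 \<notin> L0"
proof
  assume "4*m - 1 \<in> L0"
  hence "4*m-1 = m \<or> 4*m-1 = 2*m \<or> 4*m-1 = 3*m \<or> (\<exists>x\<in>A. 4*m-1 = x \<or> 4*m-1 = x+m \<or> 4*m-1 = x+2*m) \<or> (\<exists>x\<in>A. \<exists>y\<in>A. 4*m-1=x+y)"
    using L0_cases m5 by simp
  thus False using ha hb m5 by (elim disjE bexE) (auto dest!: bnd)
qed

lemma conductor: "conductor_ns S = 4*m"
  unfolding conductor_ns_def
proof (rule Least_equality)
  show "\<forall>z\<ge>4 * m. z \<in> S" using ge4 by blast
  fix c assume c: "\<forall>z\<ge>c. z \<in> S"
  show "4*m \<le> c"
  proof (rule ccontr)
    assume "\<not> 4*m \<le> c"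
    hence "4*m - 1 \<in> S" using c by auto
    hence "4*m - 1 \<in> L0" using charL m5 by simp
    thus False using notin by blast
  qed
qed

lemma m_L0: "m \<in> L0" unfolding L0_def by simp

lemma multiplicity: "multiplicity_ns S = m"
  unfolding multiplicity_ns_def
  by (rule Least_equality) (use m_L0 charL2 m5 S_pos in auto)

lemma q: "q_ns S = 4"
  unfolding q_ns_def conductor multiplicity using m5 by simp

lemma rho: "rho_ns S = 0"
  unfolding rho_ns_def q conductor multiplicity by simp

lemma L: "L_ns S = L0"
  unfolding L_ns_def conductor using charL L0_bounds by auto

lemma Dmem: "s\<in>S \<Longrightarrow> t\<in>S \<Longrightarrow> s\<noteq>0 \<Longrightarrow> t\<noteq>0 \<Longrightarrow> s+t \<in> D_ns S"
  unfolding D_ns_def Sstar_def by blast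

lemma Dge: "z \<in> D_ns S \<Longrightarrow> \<exists>s t. z = s+t \<and> s\<in>S \<and> t\<in>S \<and> m \<le> s \<and> m \<le> t"
  unfolding D_ns_def Sstar_def using S_pos by blast

lemma PL: "P_ns S \<inter> L_ns S = insert m A"
proof
  show "insert m A \<subseteq> P_ns S \<inter> L_ns S"
  proof
    fix y assume y: "y \<in> insert m A"
    hence yL: "y \<in> L0" unfolding L0_def by auto
    have yb: "0 < y \<and> y < 2*m" using y bnd[of y] ha hb m5 by auto
    have "y \<notin> D_ns S" using Dge yb by fastforce
    thus "y \<in> P_ns S \<inter> L_ns S" using yL charL2 yb unfolding P_ns_def Sstar_def L by auto
  qed
next
  show "P_ns S \<inter> L_ns S \<subseteq> insert m A"
  proof
    fix y assume y: "y \<in> P_ns S \<inter> L_ns S"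
    hence yL: "y \<in> L0" and y0: "y \<noteq> 0" and yD: "y \<notin> D_ns S"
      unfolding P_ns_def Sstar_def L by auto
    have inS: "z \<in> L0 \<Longrightarrow> z \<in> S" for z using charL2 by blast
    have xL: "x\<in>A \<Longrightarrow> x \<in> L0" "x\<in>A \<Longrightarrow> x+m \<in> L0" for x unfolding L0_def by auto
    have xp: "x\<in>A \<Longrightarrow> 0 < x" for x using bnd[of x] ha by auto
    have mm: "m \<in> S" "2*m \<in> S" using inS unfolding L0_def by auto
    show "y \<in> insert m A"
    proof (rule ccontr)
      assume nA: "y \<notin> insert m A"
      have "y = 2*m \<or> y = 3*m \<or> (\<exists>x\<in>A. y = x+m \<or> y = x+2*m) \<or> (\<exists>x\<in>A. \<exists>z\<in>A. y=x+z)"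
        using L0_cases[OF yL y0] nA by auto
      hence "y \<in> D_ns S"
      proof (elim disjE bexE)
        assume "y = 2*m" thus ?thesis using Dmem[OF mm(1) mm(1)] m5 by (simp add: mult_2)
      next
        assume "y = 3*m" thus ?thesis using Dmem[OF mm(1) mm(2)] m5 by simp
      next
        fix x assume "x\<in>A" "y = x+m" thus ?thesis using Dmem[OF inS[OF xL(1)] mm(1)] xp m5 by simp
      next
        fix x assume "x\<in>A" "y = x+2*m" thus ?thesis using Dmem[OF inS[OF xL(2)] mm(1)] xp m5 by (simp add: mult_2 add.assoc)
      next
        fix x z assume "x\<in>A" "z\<in>A" "y = x+z" thus ?thesis using Dmem[OF inS[OF xL(1)] inS[OF xL(1)], of x z] xp by simp
      qed
      thus False using yD by blast
    qed
  qed
qed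

lemma P2_img: "P2 = sum_mset ` multisets_of_size A 2"
proof
  show "P2 \<subseteq> sum_mset ` multisets_of_size A 2"
  proof
    fix z assume "z \<in> P2"
    then obtain x y where "x\<in>A" "y\<in>A" "z = x+y" unfolding P2_def by blast
    thus "z \<in> sum_mset ` multisets_of_size A 2"
      by (intro rev_image_eqI[of "{#x,y#}"]) (auto simp: multisets_of_size_def)
  qed
  show "sum_mset ` multisets_of_size A 2 \<subseteq> P2"
  proof
    fix z assume "z \<in> sum_mset ` multisets_of_size A 2"
    then obtain X where X: "set_mset X \<subseteq> A" "size X = 2" "z = sum_mset X"
      unfolding multisets_of_size_def by blast
    then obtain x y where "X = {#x,y#}" using mset_size2 by blast
    thus "z \<in> P2" using X unfolding P2_def by auto
  qed
qed

lemma P3_img: "P3 = sum_mset ` multisets_of_size A 3"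
proof
  show "P3 \<subseteq> sum_mset ` multisets_of_size A 3"
  proof
    fix z assume "z \<in> P3"
    then obtain x y w where "x\<in>A" "y\<in>A" "w\<in>A" "z = x+y+w" unfolding P3_def by blast
    thus "z \<in> sum_mset ` multisets_of_size A 3"
      by (intro rev_image_eqI[of "{#x,y,w#}"]) (auto simp: multisets_of_size_def)
  qed
  show "sum_mset ` multisets_of_size A 3 \<subseteq> P3"
  proof
    fix z assume "z \<in> sum_mset ` multisets_of_size A 3"
    then obtain X where X: "set_mset X \<subseteq> A" "size X = 3" "z = sum_mset X"
      unfolding multisets_of_size_def by blast
    then obtain x y w where "X = {#x,y,w#}" using mset_size3 by blast
    thus "z \<in> P3" using X unfolding P3_def by (auto simp: add.assoc)
  qed
qed

lemma inj_sum: "j \<in> {1,2,3} \<Longrightarrow> inj_on sum_mset (multisets_of_size A j)"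
proof (rule inj_onI)
  fix X Y assume j: "j \<in> {1,2,3}" and X: "X \<in> multisets_of_size A j" and Y: "Y \<in> multisets_of_size A j"
    and e: "sum_mset X = sum_mset Y"
  show "X = Y"
  proof (rule ccontr)
    assume "X \<noteq> Y"
    moreover have "set_mset X \<subseteq> A" "set_mset Y \<subseteq> A" "size X \<in> {1,2,3}" "size Y \<in> {1,2,3}"
      using X Y j unfolding multisets_of_size_def by auto
    ultimately have "sum_mset X mod m \<noteq> sum_mset Y mod m" using B3 by blast
    thus False using e by simp
  qed
qed

lemma card_P2: "card P2 = (card A + 1) choose 2"
  unfolding P2_img using card_image[OF inj_sum[of 2]] card_multisets_of_size[OF fin, of 2] by simp

lemma card_P3: "card P3 = (card A + 2) choose 3"
  unfolding P3_img using card_image[OF inj_sum[of 3]] card_multisets_of_size[OF fin, of 3] by simp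

lemma card_shift: "card ((\<lambda>x. x + c) ` X) = card X" for c :: nat and X
  by (rule card_image) (rule inj_onI, simp)

lemma finP2: "finite P2" unfolding P2_img using fin by auto
lemma finP3: "finite P3" unfolding P3_img using fin by auto


lemma card_L0: "card L0 = 4 + 3 * card A + ((card A + 1) choose 2)"
proof -
  define K where "K = {0,m,2*m,3*m}"
  have cK: "card K = 4" unfolding K_def using m5 by simp
  have P2b: "z \<in> P2 \<Longrightarrow> 2*a \<le> z \<and> z \<le> 2*b" for z unfolding P2_def by (auto dest!: bnd)
  have d1: "K \<inter> A = {}" unfolding K_def using ha hb m5 by (auto dest!: bnd)
  have d2: "(K \<union> A) \<inter> (\<lambda>x. x+m) ` A = {}" unfolding K_def using ha hb m5 by (auto dest!: bnd)
  have d3: "(K \<union> A \<union> (\<lambda>x. x+m) ` A) \<inter> (\<lambda>x. x+2*m) ` A = {}" unfolding K_def using ha hb m5 by (auto dest!: bnd)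
  have d4: "(K \<union> A \<union> (\<lambda>x. x+m) ` A \<union> (\<lambda>x. x+2*m) ` A) \<inter> P2 = {}" unfolding K_def using ha hb m5 by (auto dest!: bnd P2b)
  have fK: "finite K" unfolding K_def by simp
  have "card L0 = card (K \<union> A \<union> (\<lambda>x. x+m) ` A \<union> (\<lambda>x. x+2*m) ` A \<union> P2)" unfolding L0_def K_def by simp
  also have "\<dots> = card K + card A + card ((\<lambda>x. x+m) ` A) + card ((\<lambda>x. x+2*m) ` A) + card P2"
    using fin fK finP2 d1 d2 d3 d4 by (simp add: card_Un_disjoint)
  finally show ?thesis using cK card_shift card_P2 by simp
qed


definition "DQ = {4*m} \<union> (\<lambda>x. x+3*m) ` A \<union> (\<lambda>x. x+m) ` P2 \<union> P3"

lemma card_DQ: "card DQ = 1 + card A + ((card A + 1) choose 2) + ((card A + 2) choose 3)"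
proof -
  have P2b: "z \<in> P2 \<Longrightarrow> 2*a \<le> z \<and> z \<le> 2*b" for z unfolding P2_def by (auto dest!: bnd)
  have P3b: "z \<in> P3 \<Longrightarrow> 3*a \<le> z \<and> z \<le> 3*b" for z unfolding P3_def by (auto dest!: bnd)
  have r: "x + 3*m \<noteq> y + z + w" if "x\<in>A" "y\<in>A" "z\<in>A" "w\<in>A" for x y z w
  proof
    assume e: "x + 3*m = y + z + w"
    have s3: "sum_mset {#y,z,w#} = x + 3*m" using e by simp
    have "sum_mset {#x#} mod m = sum_mset {#y,z,w#} mod m"
      unfolding s3 by simp
    moreover have "size {#x#} \<noteq> size {#y,z,w#}" by simp
    hence "{#x#} \<noteq> {#y,z,w#}" by metis
    ultimately show False using B3[of "{#x#}" "{#y,z,w#}"] that by auto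
  qed
  have d1: "{4*m} \<inter> (\<lambda>x. x+3*m) ` A = {}" using ha hb m5 by (auto dest!: bnd)
  have d2: "({4*m} \<union> (\<lambda>x. x+3*m) ` A) \<inter> (\<lambda>x. x+m) ` P2 = {}" using ha hb m5 by (auto dest!: bnd P2b)
  have d3: "({4*m} \<union> (\<lambda>x. x+3*m) ` A \<union> (\<lambda>x. x+m) ` P2) \<inter> P3 = {}"
  proof -
    have "4*m \<notin> P3" using P3b ha by fastforce
    moreover have "(\<lambda>x. x+m) ` P2 \<inter> P3 = {}" using ha hb m5 by (auto dest!: P3b P2b)
    moreover have "(\<lambda>x. x+3*m) ` A \<inter> P3 = {}" using r unfolding P3_def by blast
    ultimately show ?thesis by blast
  qed
  have "card DQ = card {4*m} + card ((\<lambda>x. x+3*m) ` A) + card ((\<lambda>x. x+m) ` P2) + card P3"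
    unfolding DQ_def using fin finP2 finP3 d1 d2 d3 by (simp add: card_Un_disjoint)
  thus ?thesis using card_shift card_P2 card_P3 by simp
qed


lemma DQ_char: "z = 4*m \<or> (\<exists>x\<in>A. z = x+3*m) \<or> (\<exists>x\<in>A. \<exists>y\<in>A. z = x+y+m) \<or> (\<exists>x\<in>A. \<exists>y\<in>A. \<exists>w\<in>A. z = x+y+w) \<Longrightarrow> z \<in> DQ"
  unfolding DQ_def P2_def P3_def by blast

lemma L0_consider: assumes "s \<in> L0" "s \<noteq> 0"
  obtains "s = m" | "s = 2*m" | "s = 3*m" | x where "x\<in>A" "s = x" | x where "x\<in>A" "s = x+m"
   | x where "x\<in>A" "s = x+2*m" | x y where "x\<in>A" "y\<in>A" "s = x+y"
  using L0_cases[OF assms] by blast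

lemma lo: "x \<in> A \<Longrightarrow> a \<le> x" using bnd by blast
lemma hi: "x \<in> A \<Longrightarrow> x \<le> b" using bnd by blast

lemma Dq_sub: assumes z: "z \<in> D_ns S" "4*m \<le> z" "z \<le> 4*m+m-1" shows "z \<in> DQ"
proof -
  obtain s t where st: "z = s+t" "s\<in>S" "t\<in>S" "m \<le> s" "m \<le> t" using Dge z by blast
  have "s < 4*m" "t < 4*m" using st z m5 by linarith+
  hence sL: "s \<in> L0" and tL: "t \<in> L0" using st charL by auto
  have s0: "s \<noteq> 0" and t0: "t \<noteq> 0" using st m5 by auto
  note base = st(1) z(2,3) ha hb m5
  from L0_consider[OF sL s0] show ?thesis
  proof cases
    case 1
    note S = this
    from L0_consider[OF tL t0] show ?thesis
    proof cases
      case 1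
      note T = this
      show ?thesis using S T base  by linarith
    next
      case 2
      note T = this
      show ?thesis using S T base  by linarith
    next
      case 3
      note T = this
      show ?thesis by (rule DQ_char, rule disjI1) (use S T base  in linarith)
    next
      case (4 v2)
      note T = this
      show ?thesis using S T base lo[OF T(1)] hi[OF T(1)] by linarith
    next
      case (5 v2)
      note T = this
      show ?thesis using S T base lo[OF T(1)] hi[OF T(1)] by linarith
    next
      case (6 v2)
      note T = this
      show ?thesis by (rule DQ_char, rule disjI2, rule disjI1, rule bexI[OF _ T(1)]) (use S T base lo[OF T(1)] hi[OF T(1)] in linarith)
    next
      case (7 v2 w2)
      note T = this
      show ?thesis by (rule DQ_char, rule disjI2, rule disjI2, rule disjI1, rule bexI[OF _ T(1)], rule bexI[OF _ T(2)]) (use S T base lo[OF T(1)] hi[OF T(1)] lo[OF T(2)] hi[OF T(2)] in linarith)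
    qed
  next
    case 2
    note S = this
    from L0_consider[OF tL t0] show ?thesis
    proof cases
      case 1
      note T = this
      show ?thesis using S T base  by linarith
    next
      case 2
      note T = this
      show ?thesis by (rule DQ_char, rule disjI1) (use S T base  in linarith)
    next
      case 3
      note T = this
      show ?thesis using S T base  by linarith
    next
      case (4 v2)
      note T = this
      show ?thesis using S T base lo[OF T(1)] hi[OF T(1)] by linarith
    next
      case (5 v2)
      note T = this
      show ?thesis by (rule DQ_char, rule disjI2, rule disjI1, rule bexI[OF _ T(1)]) (use S T base lo[OF T(1)] hi[OF T(1)] in linarith)
    next
      case (6 v2)
      note T = this
      show ?thesis using S T base lo[OF T(1)] hi[OF T(1)] by linarith
    next
      case (7 v2 w2)
      note T = this
      show ?thesis using S T base lo[OF T(1)] hi[OF T(1)] lo[OF T(2)] hi[OF T(2)] by linarith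
    qed
  next
    case 3
    note S = this
    from L0_consider[OF tL t0] show ?thesis
    proof cases
      case 1
      note T = this
      show ?thesis by (rule DQ_char, rule disjI1) (use S T base  in linarith)
    next
      case 2
      note T = this
      show ?thesis using S T base  by linarith
    next
      case 3
      note T = this
      show ?thesis using S T base  by linarith
    next
      case (4 v2)
      note T = this
      show ?thesis by (rule DQ_char, rule disjI2, rule disjI1, rule bexI[OF _ T(1)]) (use S T base lo[OF T(1)] hi[OF T(1)] in linarith)
    next
      case (5 v2)
      note T = this
      show ?thesis using S T base lo[OF T(1)] hi[OF T(1)] by linarith
    next
      case (6 v2)
      note T = this
      show ?thesis using S T base lo[OF T(1)] hi[OF T(1)] by linarith
    next
      case (7 v2 w2)
      note T = this
      show ?thesis using S T base lo[OF T(1)] hi[OF T(1)] lo[OF T(2)] hi[OF T(2)] by linarith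
    qed
  next
    case (4 v1)
    note S = this
    from L0_consider[OF tL t0] show ?thesis
    proof cases
      case 1
      note T = this
      show ?thesis using S T base lo[OF S(1)] hi[OF S(1)] by linarith
    next
      case 2
      note T = this
      show ?thesis using S T base lo[OF S(1)] hi[OF S(1)] by linarith
    next
      case 3
      note T = this
      show ?thesis by (rule DQ_char, rule disjI2, rule disjI1, rule bexI[OF _ S(1)]) (use S T base lo[OF S(1)] hi[OF S(1)] in linarith)
    next
      case (4 v2)
      note T = this
      show ?thesis using S T base lo[OF S(1)] hi[OF S(1)] lo[OF T(1)] hi[OF T(1)] by linarith
    next
      case (5 v2)
      note T = this
      show ?thesis by (rule DQ_char, rule disjI2, rule disjI2, rule disjI1, rule bexI[OF _ S(1)], rule bexI[OF _ T(1)]) (use S T base lo[OF S(1)] hi[OF S(1)] lo[OF T(1)] hi[OF T(1)] in linarith)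
    next
      case (6 v2)
      note T = this
      show ?thesis using S T base lo[OF S(1)] hi[OF S(1)] lo[OF T(1)] hi[OF T(1)] by linarith
    next
      case (7 v2 w2)
      note T = this
      show ?thesis by (rule DQ_char, rule disjI2, rule disjI2, rule disjI2, rule bexI[OF _ S(1)], rule bexI[OF _ T(1)], rule bexI[OF _ T(2)]) (use S T base lo[OF S(1)] hi[OF S(1)] lo[OF T(1)] hi[OF T(1)] lo[OF T(2)] hi[OF T(2)] in linarith)
    qed
  next
    case (5 v1)
    note S = this
    from L0_consider[OF tL t0] show ?thesis
    proof cases
      case 1
      note T = this
      show ?thesis using S T base lo[OF S(1)] hi[OF S(1)] by linarith
    next
      case 2
      note T = this
      show ?thesis by (rule DQ_char, rule disjI2, rule disjI1, rule bexI[OF _ S(1)]) (use S T base lo[OF S(1)] hi[OF S(1)] in linarith)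
    next
      case 3
      note T = this
      show ?thesis using S T base lo[OF S(1)] hi[OF S(1)] by linarith
    next
      case (4 v2)
      note T = this
      show ?thesis by (rule DQ_char, rule disjI2, rule disjI2, rule disjI1, rule bexI[OF _ S(1)], rule bexI[OF _ T(1)]) (use S T base lo[OF S(1)] hi[OF S(1)] lo[OF T(1)] hi[OF T(1)] in linarith)
    next
      case (5 v2)
      note T = this
      show ?thesis using S T base lo[OF S(1)] hi[OF S(1)] lo[OF T(1)] hi[OF T(1)] by linarith
    next
      case (6 v2)
      note T = this
      show ?thesis using S T base lo[OF S(1)] hi[OF S(1)] lo[OF T(1)] hi[OF T(1)] by linarith
    next
      case (7 v2 w2)
      note T = this
      show ?thesis using S T base lo[OF S(1)] hi[OF S(1)] lo[OF T(1)] hi[OF T(1)] lo[OF T(2)] hi[OF T(2)] by linarith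
    qed
  next
    case (6 v1)
    note S = this
    from L0_consider[OF tL t0] show ?thesis
    proof cases
      case 1
      note T = this
      show ?thesis by (rule DQ_char, rule disjI2, rule disjI1, rule bexI[OF _ S(1)]) (use S T base lo[OF S(1)] hi[OF S(1)] in linarith)
    next
      case 2
      note T = this
      show ?thesis using S T base lo[OF S(1)] hi[OF S(1)] by linarith
    next
      case 3
      note T = this
      show ?thesis using S T base lo[OF S(1)] hi[OF S(1)] by linarith
    next
      case (4 v2)
      note T = this
      show ?thesis using S T base lo[OF S(1)] hi[OF S(1)] lo[OF T(1)] hi[OF T(1)] by linarith
    next
      case (5 v2)
      note T = this
      show ?thesis using S T base lo[OF S(1)] hi[OF S(1)] lo[OF T(1)] hi[OF T(1)] by linarith
    next
      case (6 v2)
      note T = this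
      show ?thesis using S T base lo[OF S(1)] hi[OF S(1)] lo[OF T(1)] hi[OF T(1)] by linarith
    next
      case (7 v2 w2)
      note T = this
      show ?thesis using S T base lo[OF S(1)] hi[OF S(1)] lo[OF T(1)] hi[OF T(1)] lo[OF T(2)] hi[OF T(2)] by linarith
    qed
  next
    case (7 v1 w1)
    note S = this
    from L0_consider[OF tL t0] show ?thesis
    proof cases
      case 1
      note T = this
      show ?thesis by (rule DQ_char, rule disjI2, rule disjI2, rule disjI1, rule bexI[OF _ S(1)], rule bexI[OF _ S(2)]) (use S T base lo[OF S(1)] hi[OF S(1)] lo[OF S(2)] hi[OF S(2)] in linarith)
    next
      case 2
      note T = this
      show ?thesis using S T base lo[OF S(1)] hi[OF S(1)] lo[OF S(2)] hi[OF S(2)] by linarith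
    next
      case 3
      note T = this
      show ?thesis using S T base lo[OF S(1)] hi[OF S(1)] lo[OF S(2)] hi[OF S(2)] by linarith
    next
      case (4 v2)
      note T = this
      show ?thesis by (rule DQ_char, rule disjI2, rule disjI2, rule disjI2, rule bexI[OF _ S(1)], rule bexI[OF _ S(2)], rule bexI[OF _ T(1)]) (use S T base lo[OF S(1)] hi[OF S(1)] lo[OF S(2)] hi[OF S(2)] lo[OF T(1)] hi[OF T(1)] in linarith)
    next
      case (5 v2)
      note T = this
      show ?thesis using S T base lo[OF S(1)] hi[OF S(1)] lo[OF S(2)] hi[OF S(2)] lo[OF T(1)] hi[OF T(1)] by linarith
    next
      case (6 v2)
      note T = this
      show ?thesis using S T base lo[OF S(1)] hi[OF S(1)] lo[OF S(2)] hi[OF S(2)] lo[OF T(1)] hi[OF T(1)] by linarith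
    next
      case (7 v2 w2)
      note T = this
      show ?thesis using S T base lo[OF S(1)] hi[OF S(1)] lo[OF S(2)] hi[OF S(2)] lo[OF T(1)] hi[OF T(1)] lo[OF T(2)] hi[OF T(2)] by linarith
    qed
  qed
qed


lemma Dq_sup: assumes "z \<in> DQ" shows "z \<in> D_ns S" "4*m \<le> z" "z \<le> 4*m+m-1"
proof -
  have inS: "y \<in> L0 \<Longrightarrow> y \<in> S" for y using charL2 by blast
  have mS: "m \<in> S" "3*m \<in> S" using inS unfolding L0_def by auto
  have x2S: "x\<in>A \<Longrightarrow> x+2*m \<in> S" "x\<in>A \<Longrightarrow> x \<in> S" for x using inS unfolding L0_def by auto
  have p2S: "x\<in>A \<Longrightarrow> y\<in>A \<Longrightarrow> x+y \<in> S" for x y using inS unfolding L0_def P2_def by blast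
  from assms consider "z = 4*m" | x where "x\<in>A" "z = x+3*m" | x y where "x\<in>A" "y\<in>A" "z = x+y+m"
    | x y w where "x\<in>A" "y\<in>A" "w\<in>A" "z = x+y+w"
    unfolding DQ_def P2_def P3_def by blast
  hence "z \<in> D_ns S \<and> 4*m \<le> z \<and> z \<le> 4*m+m-1"
  proof cases
    case 1 thus ?thesis using Dmem[OF mS(1) mS(2)] m5 by simp
  next
    case (2 x)
    have "x + 2*m + m \<in> D_ns S" using Dmem[OF x2S(1)[OF 2(1)] mS(1)] m5 by simp
    moreover have "x + 2*m + m = z" using 2 by simp
    ultimately show ?thesis using 2 lo[OF 2(1)] hi[OF 2(1)] ha hb m5 by auto
  next
    case (3 x y)
    have "x + y + m \<in> D_ns S" using Dmem[OF p2S[OF 3(1,2)] mS(1)] lo[OF 3(1)] ha m5 by simp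
    thus ?thesis using 3 lo[OF 3(1)] hi[OF 3(1)] lo[OF 3(2)] hi[OF 3(2)] ha hb m5 by auto
  next
    case (4 x y w)
    have "x + (y + w) \<in> D_ns S" using Dmem[OF x2S(2)[OF 4(1)] p2S[OF 4(2,3)]] lo[OF 4(1)] lo[OF 4(2)] ha by simp
    moreover have "x + (y+w) = z" using 4 by simp
    ultimately show ?thesis using 4 lo[OF 4(1)] hi[OF 4(1)] lo[OF 4(2)] hi[OF 4(2)] lo[OF 4(3)] hi[OF 4(3)] ha hb m5 by auto
  qed
  thus "z \<in> D_ns S" "4*m \<le> z" "z \<le> 4*m+m-1" by auto
qed

lemma Dq: "Dq_ns S = DQ"
  unfolding Dq_ns_def conductor multiplicity using Dq_sub Dq_sup by auto

end

theorem proposition3p3: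
  fixes m a b n :: nat and A :: "nat set"
  assumes "m > 0" "a > 0" "b > 0" "n \<ge> 3"
    and "real (3 * m + 1) / 2 \<le> real a" "a < b" "real b \<le> (5 * real m - 1) / 3"
    and "A \<subseteq> {1..}" "finite A" "card A = n - 1" "Min A = a" "Max A = b"
    and B3: "\<And>X Y. set_mset X \<subseteq> A \<Longrightarrow> set_mset Y \<subseteq> A
              \<Longrightarrow> size X \<in> {1,2,3} \<Longrightarrow> size Y \<in> {1,2,3} \<Longrightarrow> X \<noteq> Y
              \<Longrightarrow> sum_mset X mod m \<noteq> sum_mset Y mod m"
  shows "conductor_ns (gen_sg ({m} \<union> A) (4 * m)) = 4 * m
       \<and> card (P_ns (gen_sg ({m} \<union> A) (4 * m)) \<inter> L_ns (gen_sg ({m} \<union> A) (4 * m))) = n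
       \<and> W0 (gen_sg ({m} \<union> A) (4 * m)) = - int (n choose 3)"
proof -
  have ne: "A \<noteq> {}" using assms(4,10) by auto
  have bnd: "\<And>x. x\<in>A \<Longrightarrow> a \<le> x \<and> x \<le> b" using assms(9,11,12) by auto
  have ha: "3*m+1 \<le> 2*a"
  proof -
    have "real (3*m+1) \<le> 2 * real a" using assms(5) by simp
    hence "real (3*m+1) \<le> real (2*a)" by simp
    thus ?thesis by linarith
  qed
  have hb: "3*b+1 \<le> 5*m"
  proof -
    have "3 * real b + 1 \<le> 5 * real m" using assms(7) by simp
    hence "real (3*b+1) \<le> real (5*m)" by simp
    thus ?thesis by linarith
  qed
  interpret ctx m a b A
    by unfold_locales (use assms(9) bnd ha hb assms(6) B3 in auto)
  have SS: "gen_sg ({m} \<union> A) (4 * m) = S" unfolding S_def by simp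
  have mA: "m \<notin> A" using bnd ha by fastforce
  have k: "card A + 1 = n" using assms(4,10) by simp
  have cPL: "card (P_ns S \<inter> L_ns S) = n" unfolding PL using mA assms(9) k by simp
  have "W0 S = int (card A + 1) * int (4 + 3 * card A + ((card A + 1) choose 2))
     - 4 * int (1 + card A + ((card A + 1) choose 2) + ((card A + 2) choose 3)) + 0"
    unfolding W0_def cPL unfolding L card_L0 q Dq card_DQ rho k by simp
  also have "\<dots> = - int (n choose 3)" using w0_arith[of "card A"] by (simp only: k[symmetric])
  finally have w: "W0 S = - int (n choose 3)" .
  show ?thesis unfolding SS using conductor cPL w by blast
qed

end
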